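(* Let $\rho_{AB}$ be a bipartite state on systems $A,B$ of equal finite dimension $d$, each with observable $L=\sum_{n=0}^{d-1}n|n\rangle\langle n|$. If $\mathrm{modes}(\rho_{AB})\neq\{0\}$ but $[1,d-1]\cap\mathrm{modes}(\rho_{AB})=\emptyset$ — equivalently $\rho_{AB}=\rho_{AB}^{(0)}+\sum_{i\ge d}\rho_{AB}^{(i)}$ with $\sum_{i\ge d}\rho_{AB}^{(i)}\neq0$ — then $\rho_{AB}$ is not a product state.
   Context: $L_{AB}=L\otimes\mathbb{I}+\mathbb{I}\otimes L=\sum_c c\,\Pi_c$ with $\Pi_c$ its eigenprojectors. The $j$th mode of a bipartite operator $X$ is $X^{(j)}:=\sum_c\Pi_{c+j}X\Pi_c$, and $\mathrm{modes}(X):=\{j\in\mathbb{N}:X^{(j)}\neq0\}$. *)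

theory Defs
  imports "Jordan_Normal_Form.Matrix" Complex_Main
begin

text \<open>Bipartite operators on C^d (x) C^d are (d*d) x (d*d) matrices, where the basis
vector |a> (x) |b> has index a*d+b (standard Kronecker ordering).\<close>

definition kron :: "complex mat \<Rightarrow> complex mat \<Rightarrow> complex mat" where
  "kron A B = mat (dim_row A * dim_row B) (dim_col A * dim_col B)
     (\<lambda>(i,j). A $$ (i div dim_row B, j div dim_col B) * B $$ (i mod dim_row B, j mod dim_col B))"

definition obsL :: "nat \<Rightarrow> complex mat" where
  "obsL d = mat d d (\<lambda>(i,j). if i = j then of_nat i else 0)"

definition LAB :: "nat \<Rightarrow> complex mat" where
  "LAB d = kron (obsL d) (1\<^sub>m d) + kron (1\<^sub>m d) (obsL d)"

text \<open>Eigenprojector Pi_c of L_AB for the value c (L_AB is diagonal in the product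
basis, so Pi_c is the diagonal 0/1 matrix selecting the basis vectors with L_AB-eigenvalue c;
it is the zero matrix if c is not an eigenvalue).\<close>
definition Proj :: "nat \<Rightarrow> nat \<Rightarrow> complex mat" where
  "Proj d c = mat (d*d) (d*d) (\<lambda>(i,j). if i = j \<and> LAB d $$ (i,i) = of_nat c then 1 else 0)"

text \<open>j-th mode X^(j) = sum_c Pi_(c+j) X Pi_c; the eigenvalues of L_AB are 0..2d-2,
so the sum ranges over c < 2d (entrywise sum of the matrices).\<close>
definition mode :: "nat \<Rightarrow> nat \<Rightarrow> complex mat \<Rightarrow> complex mat" where
  "mode d j X = mat (d*d) (d*d) (\<lambda>(i,k). \<Sum>c<2*d. (Proj d (c+j) * X * Proj d c) $$ (i,k))"

definition modes :: "nat \<Rightarrow> complex mat \<Rightarrow> nat set" where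
  "modes d X = {j. mode d j X \<noteq> 0\<^sub>m (d*d) (d*d)}"

definition is_state :: "nat \<Rightarrow> complex mat \<Rightarrow> bool" where
  "is_state n \<rho> \<longleftrightarrow> \<rho> \<in> carrier_mat n n
     \<and> (\<forall>i<n. \<forall>j<n. \<rho> $$ (j,i) = cnj (\<rho> $$ (i,j)))
     \<and> (\<forall>v :: complex vec. dim_vec v = n \<longrightarrow>
           0 \<le> Re (\<Sum>i<n. \<Sum>j<n. cnj (v $ i) * \<rho> $$ (i,j) * v $ j))
     \<and> (\<Sum>i<n. \<rho> $$ (i,i)) = 1"

definition is_product_state :: "nat \<Rightarrow> complex mat \<Rightarrow> bool" where
  "is_product_state d \<rho> \<longleftrightarrow> (\<exists>\<rho>A \<rho>B. is_state d \<rho>A \<and> is_state d \<rho>B \<and> \<rho> = kron \<rho>A \<rho>B)"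

end

theory Submission
  imports Defs
begin

lemma kron_index:
  assumes "A \<in> carrier_mat n n" "B \<in> carrier_mat m m" "i < n*m" "k < n*m"
  shows "kron A B $$ (i,k) = A $$ (i div m, k div m) * B $$ (i mod m, k mod m)"
  using assms unfolding kron_def by auto

lemma LAB_diag:
  assumes "i < d*d"
  shows "LAB d $$ (i,i) = of_nat (i div d + i mod d)"
proof -
  have d: "d > 0" using assms by (cases d) auto
  have "i div d < d" using assms by (simp add: less_mult_imp_div_less)
  moreover have "i mod d < d" using d by simp
  ultimately show ?thesis using assms unfolding LAB_def
    by (simp add: kron_def obsL_def)
qed

lemma mult_idx:
  assumes "A \<in> carrier_mat n m" "B \<in> carrier_mat m p" "i < n" "k < p"
  shows "(A*B) $$ (i,k) = (\<Sum>l<m. A $$ (i,l) * B $$ (l,k))"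
  using assms by (auto simp: scalar_prod_def lessThan_atLeast0 intro!: sum.cong)

lemma diag_mult:
  fixes X :: "complex mat"
  assumes "X \<in> carrier_mat n n" "i < n" "k < n"
  shows "(mat n n (\<lambda>(i,j). if i = j \<and> P i then 1 else 0) * X * mat n n (\<lambda>(i,j). if i = j \<and> Q i then 1 else 0)) $$ (i,k)
     = (if P i \<and> Q k then X $$ (i,k) else 0)"
proof -
  let ?D = "mat n n (\<lambda>(i,j). if i = j \<and> P i then (1::complex) else 0)"
  let ?E = "mat n n (\<lambda>(i,j). if i = j \<and> Q i then (1::complex) else 0)"
  have r: "(?D * X) $$ (i,l) = (if P i then X $$ (i,l) else 0)" if "l < n" for l
  proof -
    have "(?D * X) $$ (i,l) = (\<Sum>t<n. ?D $$ (i,t) * X $$ (t,l))"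
      using assms that by (subst mult_idx[where m=n]) auto
    also have "\<dots> = (\<Sum>t<n. if t = i then (if P i then X $$ (i,l) else 0) else 0)"
      using assms by (intro sum.cong) auto
    also have "\<dots> = (if P i then X $$ (i,l) else 0)" using assms by simp
    finally show ?thesis .
  qed
  have "(?D * X * ?E) $$ (i,k) = (\<Sum>l<n. (?D * X) $$ (i,l) * ?E $$ (l,k))"
    using assms by (subst mult_idx[where m=n]) auto
  also have "\<dots> = (\<Sum>l<n. if l = k then (if P i \<and> Q k then X $$ (i,k) else 0) else 0)"
    using assms by (intro sum.cong refl) (auto simp: r simp del: index_mult_mat)
  also have "\<dots> = (if P i \<and> Q k then X $$ (i,k) else 0)" using assms by simp
  finally show ?thesis .
qed

lemma mode_index:
  assumes "X \<in> carrier_mat (d*d) (d*d)" "i < d*d" "k < d*d"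
  shows "mode d j X $$ (i,k) = (if i div d + i mod d = k div d + k mod d + j then X $$ (i,k) else 0)"
proof -
  have d: "d > 0" using assms by (cases d) auto
  have kd: "k div d < d" using assms by (simp add: less_mult_imp_div_less)
  have ev: "k div d + k mod d < 2*d" using kd d mod_less_divisor[of d k] by linarith
  have "mode d j X $$ (i,k) = (\<Sum>c<2*d. (Proj d (c+j) * X * Proj d c) $$ (i,k))"
    using assms unfolding mode_def by simp
  also have "\<dots> = (\<Sum>c<2*d. if c = k div d + k mod d then
        (if i div d + i mod d = k div d + k mod d + j then X $$ (i,k) else 0) else 0)"
  proof (intro sum.cong refl)
    fix c assume "c \<in> {..<2*d}"
    have "Proj d (c+j) = mat (d*d) (d*d) (\<lambda>(i,j'). if i = j' \<and> LAB d $$ (i,i) = of_nat (c+j) then 1 else 0)"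
      unfolding Proj_def by simp
    show "(Proj d (c+j) * X * Proj d c) $$ (i,k) = (if c = k div d + k mod d then
        (if i div d + i mod d = k div d + k mod d + j then X $$ (i,k) else 0) else 0)"
      unfolding Proj_def using assms
      by (subst diag_mult[OF assms]) (auto simp: LAB_diag simp del: of_nat_add)
  qed
  also have "\<dots> = (if i div d + i mod d = k div d + k mod d + j then X $$ (i,k) else 0)"
    using ev by simp
  finally show ?thesis .
qed

lemma sum2:
  fixes n :: nat
  assumes "i < n" "j < n" "i \<noteq> j" "\<And>l. l < n \<Longrightarrow> l \<noteq> i \<Longrightarrow> l \<noteq> j \<Longrightarrow> g l = 0"
  shows "(\<Sum>l<n. g l) = g i + g j"
proof -
  have "(\<Sum>l<n. g l) = (\<Sum>l\<in>{i,j}. g l)"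
    apply (rule sum.mono_neutral_right)
      apply simp
    using assms apply auto done
  also have "\<dots> = g i + g j" using assms by simp
  finally show ?thesis .
qed

lemma state_carrier: "is_state n \<rho> \<Longrightarrow> \<rho> \<in> carrier_mat n n"
  unfolding is_state_def by simp

lemma psd_zero:
  assumes st: "is_state n \<rho>" and ij: "i < n" "j < n" "i \<noteq> j" and z: "\<rho> $$ (j,j) = 0"
  shows "\<rho> $$ (i,j) = 0"
proof (rule ccontr)
  assume rnz: "\<rho> $$ (i,j) \<noteq> 0"
  define r where "r = \<rho> $$ (i,j)"
  define q where "q = Re (\<rho> $$ (i,i))"
  define t where "t = (\<bar>q\<bar> + 1) / (2 * (cmod r)^2)"
  define x where "x = - complex_of_real t * cnj r"
  define v where "v = vec n (\<lambda>k. if k = i then 1 else if k = j then x else 0)"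
  have hh: "\<forall>i<n. \<forall>j<n. \<rho> $$ (j,i) = cnj (\<rho> $$ (i,j))" using st unfolding is_state_def by blast
  have herm: "\<rho> $$ (j,i) = cnj r" using hh ij unfolding r_def by blast
  have psd: "\<forall>w::complex vec. dim_vec w = n \<longrightarrow> 0 \<le> Re (\<Sum>k<n. \<Sum>l<n. cnj (w $ k) * \<rho> $$ (k,l) * w $ l)"
    using st unfolding is_state_def by blast
  have dv: "dim_vec v = n" by (simp add: v_def)
  have vi: "v $ i = 1" using ij by (simp add: v_def)
  have vj: "v $ j = x" using ij by (simp add: v_def)
  have vo: "\<And>k. k < n \<Longrightarrow> k \<noteq> i \<Longrightarrow> k \<noteq> j \<Longrightarrow> v $ k = 0" by (simp add: v_def)
  have "0 \<le> Re (\<Sum>k<n. \<Sum>l<n. cnj (v $ k) * \<rho> $$ (k,l) * v $ l)"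
    using psd dv by blast
  also have "(\<Sum>k<n. \<Sum>l<n. cnj (v $ k) * \<rho> $$ (k,l) * v $ l)
      = (\<Sum>k<n. cnj (v $ k) * \<rho> $$ (k,i) * v $ i + cnj (v $ k) * \<rho> $$ (k,j) * v $ j)"
    apply (intro sum.cong refl sum2)
    using ij vo by auto
  also have "\<dots> = (cnj (v $ i) * \<rho> $$ (i,i) * v $ i + cnj (v $ i) * \<rho> $$ (i,j) * v $ j)
      + (cnj (v $ j) * \<rho> $$ (j,i) * v $ i + cnj (v $ j) * \<rho> $$ (j,j) * v $ j)"
    apply (intro sum2)
    using ij vo by auto
  also have "\<dots> = \<rho> $$ (i,i) + r * x + cnj x * cnj r"
    using ij z herm vi vj by (simp add: r_def)
  finally have "0 \<le> q + Re (r * x + cnj x * cnj r)" by (simp add: q_def)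
  moreover have "r * x + cnj x * cnj r = - 2 * complex_of_real t * (r * cnj r)"
    by (simp add: x_def algebra_simps)
  moreover have "r * cnj r = complex_of_real ((cmod r)^2)"
    using complex_norm_square[of r] by (simp del: of_real_power)
  moreover have "cmod r > 0" using rnz r_def by simp
  ultimately have "0 \<le> q + Re (- 2 * complex_of_real t * complex_of_real ((cmod r)^2))" by simp
  then have "0 \<le> q - 2 * t * (cmod r)^2" by simp
  moreover have "2 * t * (cmod r)^2 = \<bar>q\<bar> + 1" using \<open>cmod r > 0\<close> by (simp add: t_def)
  ultimately show False by linarith
qed


lemma mode_carrier: "mode d j X \<in> carrier_mat (d*d) (d*d)"
  unfolding mode_def by simp

theorem lemma4:
  fixes d :: nat and \<rho> :: "complex mat"
  assumes "is_state (d*d) \<rho>"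
    and "modes d \<rho> \<noteq> {0}"
    and "\<forall>j. 1 \<le> j \<and> j \<le> d - 1 \<longrightarrow> j \<notin> modes d \<rho>"
  shows "\<not> is_product_state d \<rho>"
proof
  assume "is_product_state d \<rho>"
  then obtain A B where A: "is_state d A" and B: "is_state d B" and rho: "\<rho> = kron A B"
    unfolding is_product_state_def by blast
  have Ac: "A \<in> carrier_mat d d" and Bc: "B \<in> carrier_mat d d"
    using A B by (auto simp: state_carrier)
  have rc: "\<rho> \<in> carrier_mat (d*d) (d*d)" using assms(1) by (simp add: state_carrier)
  have ridx: "\<rho> $$ (i,k) = A $$ (i div d, k div d) * B $$ (i mod d, k mod d)"
    if "i < d*d" "k < d*d" for i k
    using kron_index[OF Ac Bc that] rho by simp
  have nz_mode: "\<exists>i<d*d. \<exists>k<d*d. i div d + i mod d = k div d + k mod d + j \<and> \<rho> $$ (i,k) \<noteq> 0"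
    if "j \<in> modes d \<rho>" for j
  proof (rule ccontr)
    assume "\<not> ?thesis"
    then have "mode d j \<rho> = 0\<^sub>m (d*d) (d*d)"
      by (intro eq_matI) (auto simp: mode_index[OF rc] mode_carrier[THEN carrier_matD(1)] mode_carrier[THEN carrier_matD(2)])
    then show False using that unfolding modes_def by simp
  qed
  have in_modes: "j \<in> modes d \<rho>" if "i < d*d" "k < d*d"
     "i div d + i mod d = k div d + k mod d + j" "\<rho> $$ (i,k) \<noteq> 0" for i k j
  proof -
    have "mode d j \<rho> $$ (i,k) \<noteq> 0" using that by (simp add: mode_index[OF rc])
    then have "mode d j \<rho> \<noteq> 0\<^sub>m (d*d) (d*d)" using that by auto
    then show ?thesis unfolding modes_def by simp
  qed
  obtain j where j: "j \<in> modes d \<rho>" "j \<ge> d"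
  proof (cases "\<exists>j\<in>modes d \<rho>. j \<noteq> 0")
    case True
    then obtain j where "j \<in> modes d \<rho>" "j \<noteq> 0" by blast
    moreover have "\<not> (1 \<le> j \<and> j \<le> d - 1)" using assms(3) calculation(1) by blast
    moreover have "j \<ge> d" using calculation(2,3) by arith
    ultimately show ?thesis using that by blast
  next
    case False
    then have "modes d \<rho> \<subseteq> {0}" by blast
    then have emp: "modes d \<rho> = {}" using assms(2) by (metis subset_singletonD)
    have diag0: "\<rho> $$ (i,i) = 0" if "i < d*d" for i
    proof (rule ccontr)
      assume "\<rho> $$ (i,i) \<noteq> 0"
      then have "0 \<in> modes d \<rho>" using in_modes[of i i 0] that by simp
      then show False using emp by simp
    qed
    have "(\<Sum>i<d*d. \<rho> $$ (i,i)) = 0" using diag0 by simp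
    moreover have "(\<Sum>i<d*d. \<rho> $$ (i,i)) = 1" using assms(1) unfolding is_state_def by blast
    ultimately show ?thesis by simp
  qed
  from nz_mode[OF j(1)] obtain i k where ik: "i < d*d" "k < d*d"
    "i div d + i mod d = k div d + k mod d + j" "\<rho> $$ (i,k) \<noteq> 0" by blast
  have d0: "d > 0" using ik by (cases d) auto
  define a where "a = i div d"
  define b where "b = i mod d"
  define a' where "a' = k div d"
  define b' where "b' = k mod d"
  have lt: "a < d" "b < d" "a' < d" "b' < d"
    using ik d0 by (auto simp: a_def b_def a'_def b'_def less_mult_imp_div_less)
  have sum: "a + b = a' + b' + j" using ik by (simp add: a_def b_def a'_def b'_def)
  have aa: "a > a'" "b > b'" using sum lt j(2) by linarith+
  have Anz: "A $$ (a,a') \<noteq> 0" and Bnz: "B $$ (b,b') \<noteq> 0"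
    using ik ridx[OF ik(1,2)] by (auto simp: a_def b_def a'_def b'_def)
  have Bd: "B $$ (b',b') \<noteq> 0"
    using psd_zero[OF B lt(2) lt(4)] aa Bnz by auto
  define i2 where "i2 = a * d + b'"
  have i2lt: "i2 < d*d"
  proof -
    have "a * d + b' < a * d + d" using lt by simp
    also have "\<dots> = (a+1) * d" by simp
    also have "\<dots> \<le> d * d" using lt(1) by (intro mult_le_mono1) simp
    finally show ?thesis by (simp add: i2_def)
  qed
  have i2d: "i2 div d = a" "i2 mod d = b'" using lt d0 by (auto simp: i2_def)
  have "\<rho> $$ (i2,k) \<noteq> 0" using ridx[OF i2lt ik(2)] i2d Anz Bd
    by (simp add: a'_def b'_def)
  moreover have "i2 div d + i2 mod d = k div d + k mod d + (a - a')"
    using i2d aa by (simp add: a'_def b'_def)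
  ultimately have "a - a' \<in> modes d \<rho>" using in_modes[OF i2lt ik(2)] by blast
  moreover have "1 \<le> a - a'" "a - a' \<le> d - 1" using aa lt by auto
  ultimately show False using assms(3) by blast
qed

end
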